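(* Let $\sigma$ be a permutation of $[n]$ and let $T_\sigma=\Psi(\sigma)$. Then $\mathrm{inv}(\sigma)=\mathrm{inv}(T_\sigma)$, $\mathrm{RLmin}(\sigma)=|R_{T_\sigma}|$, and $\mathrm{IDes}(\sigma)=\mathrm{IDes}(T_\sigma)$.
   Context: The map $\Psi$ sends a word $\pi$ of distinct integers to an increasing binary tree: $\Psi(\emptyset)=\emptyset$; otherwise write $\pi=\sigma\, i\,\tau$ with $i$ the least letter, and let $\Psi(\pi)$ have root $i$, left subtree $\Psi(\sigma)$, right subtree $\Psi(\tau)$. For a permutation $\sigma=\sigma_1\cdots\sigma_n$: $\mathrm{inv}(\sigma)$ is the number of pairs $i<j$ with $\sigma_i>\sigma_j$; $\mathrm{RLmin}(\sigma)$ is the number of $\sigma_i$ with $\sigma_j>\sigma_i$ for all $j>i$; $\mathrm{IDes}(\sigma)=\mathrm{Des}(\sigma^{-1})$, the set of $i\in[n-1]$ such that $i+1$ appears to the left of $i$ in $\sigma$. For an increasing binary tree $T$ on $[n]$ (root labeled $1$): an inversion of $T$ is a pair of vertices $(i,j)$ with $i>j$ such that either $j$ lies to the right of the path from the root $1$ to $i$, or $j$ is on the path from the root to $i$ and the left child of $j$ is on this path. $\mathrm{inv}(T)$ is the number of inversions of $T$; $\mathrm{IDes}(T)$ is the set of $i-1$ such that $(i,i-1)$ is an inversion of $T$; $R_T$ is the set of vertices of $T$ that do not belong to any left subtree of $T$ (i.e. the root together with the vertices reached from it by moving only to right children). *)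

theory Defs
  imports Main "HOL-Library.Tree"
begin

lemma length_takeWhile_neq_less:
  "i \<in> set ys \<Longrightarrow> length (takeWhile (\<lambda>y. y \<noteq> i) ys) < length ys"
  by (induction ys) auto

function psi :: "nat list \<Rightarrow> nat tree" where
  "psi [] = Leaf"
| "psi (x # xs) =
     (let i = Min (set (x # xs))
      in Node (psi (takeWhile (\<lambda>y. y \<noteq> i) (x # xs))) i
              (psi (tl (dropWhile (\<lambda>y. y \<noteq> i) (x # xs)))))"
  by pat_completeness auto
termination
proof (relation "measure length")
  fix x xs i
  assume i: "i = Min (set (x # xs))"
  have "i \<in> set (x # xs)" using i by (metis List.finite_set Min_in list.distinct(1) set_empty)
  then have "length (takeWhile (\<lambda>y. y \<noteq> i) (x # xs)) < length (x # xs)"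
    by (rule length_takeWhile_neq_less)
  then show "(takeWhile (\<lambda>y. y \<noteq> i) (x # xs), x # xs) \<in> measure length" by simp
  have "length (dropWhile (\<lambda>y. y \<noteq> i) (x # xs)) \<le> length (x # xs)"
    by (metis length_dropWhile_le)
  then show "(tl (dropWhile (\<lambda>y. y \<noteq> i) (x # xs)), x # xs) \<in> measure length" by simp
qed simp

definition perm_inv :: "nat list \<Rightarrow> nat" where
  "perm_inv s = card {(i, j). i < j \<and> j < length s \<and> s ! i > s ! j}"

definition RLmin :: "nat list \<Rightarrow> nat" where
  "RLmin s = card {i. i < length s \<and> (\<forall>j. i < j \<and> j < length s \<longrightarrow> s ! j > s ! i)}"

definition IDes_perm :: "nat list \<Rightarrow> nat set" where
  "IDes_perm s = {i. 1 \<le> i \<and> i < length s \<and>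
     (\<exists>p q. p < q \<and> q < length s \<and> s ! p = i + 1 \<and> s ! q = i)}"

fun label_at :: "'a tree \<Rightarrow> bool list \<Rightarrow> 'a option" where
  "label_at Leaf _ = None"
| "label_at (Node l x r) [] = Some x"
| "label_at (Node l x r) (False # a) = label_at l a"
| "label_at (Node l x r) (True # a) = label_at r a"

(* the vertex at address q lies to the right of the path from the root to the vertex at address p *)
definition right_of_path :: "bool list \<Rightarrow> bool list \<Rightarrow> bool" where
  "right_of_path p q \<longleftrightarrow>
     (\<exists>c d e. p = c @ False # d \<and> q = c @ True # e) \<or> (\<exists>e. q = p @ True # e)"

definition tree_inversion :: "nat tree \<Rightarrow> nat \<Rightarrow> nat \<Rightarrow> bool" where
  "tree_inversion T i j \<longleftrightarrow> i > j \<and>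
     (\<exists>p q. label_at T p = Some i \<and> label_at T q = Some j \<and>
        (right_of_path p q \<or> (\<exists>d. p = q @ False # d)))"

definition tree_inv :: "nat tree \<Rightarrow> nat" where
  "tree_inv T = card {(i, j). tree_inversion T i j}"

definition IDes_tree :: "nat tree \<Rightarrow> nat set" where
  "IDes_tree T = {k. \<exists>i. k = i - 1 \<and> tree_inversion T i (i - 1)}"

definition R_tree :: "nat tree \<Rightarrow> nat set" where
  "R_tree T = {v. \<exists>m. label_at T (replicate m True) = Some v}"

end

theory Submission
  imports Defs
begin

fun bef :: "nat list \<Rightarrow> nat \<Rightarrow> nat \<Rightarrow> bool" where
  "bef [] a b = False"
| "bef (x # xs) a b = ((x = a \<and> b \<in> set xs) \<or> bef xs a b)"

lemma bef_append: "bef (xs @ ys) a b \<longleftrightarrow> bef xs a b \<or> bef ys a b \<or> (a \<in> set xs \<and> b \<in> set ys)"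
  by (induction xs) auto

lemma bef_nth: "bef xs a b \<longleftrightarrow> (\<exists>k1 k2. k1 < k2 \<and> k2 < length xs \<and> xs ! k1 = a \<and> xs ! k2 = b)"
proof (induction xs)
  case Nil
  then show ?case by simp
next
  case (Cons x xs)
  show ?case
  proof
    assume "bef (x # xs) a b"
    then consider "x = a" "b \<in> set xs" | "bef xs a b" by auto
    then show "\<exists>k1 k2. k1 < k2 \<and> k2 < length (x # xs) \<and> (x # xs) ! k1 = a \<and> (x # xs) ! k2 = b"
    proof cases
      case 1
      then obtain k where "k < length xs" "xs ! k = b" by (metis in_set_conv_nth)
      then show ?thesis using 1 by (intro exI[of _ 0] exI[of _ "Suc k"]) auto
    next
      case 2
      then obtain k1 k2 where "k1 < k2 \<and> k2 < length xs \<and> xs ! k1 = a \<and> xs ! k2 = b"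
        using Cons.IH by blast
      then show ?thesis by (intro exI[of _ "Suc k1"] exI[of _ "Suc k2"]) auto
    qed
  next
    assume "\<exists>k1 k2. k1 < k2 \<and> k2 < length (x # xs) \<and> (x # xs) ! k1 = a \<and> (x # xs) ! k2 = b"
    then obtain k1 k2 where k: "k1 < k2" "k2 < length (x # xs)" "(x # xs) ! k1 = a" "(x # xs) ! k2 = b"
      by blast
    obtain k2' where k2': "k2 = Suc k2'" using k(1) by (cases k2) auto
    show "bef (x # xs) a b"
    proof (cases k1)
      case 0
      then show ?thesis using k k2' by (auto simp: in_set_conv_nth)
    next
      case (Suc k1')
      then have "bef xs a b" using Cons.IH k k2' by auto
      then show ?thesis by simp
    qed
  qed
qed

definition RR :: "bool list \<Rightarrow> bool list \<Rightarrow> bool" where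
  "RR p q \<longleftrightarrow> right_of_path p q \<or> (\<exists>d. p = q @ False # d)"

lemma RR_simps:
  "\<not> RR [] []"
  "\<not> RR [] (False # q)"
  "RR [] (True # q)"
  "RR (False # p) []"
  "RR (False # p) (False # q) = RR p q"
  "RR (False # p) (True # q)"
  "\<not> RR (True # p) []"
  "\<not> RR (True # p) (False # q)"
  "RR (True # p) (True # q) = RR p q"
  unfolding RR_def right_of_path_def
  by (auto simp: Cons_eq_append_conv)

lemma ex_addr: "(\<exists>p. P p) \<longleftrightarrow> P [] \<or> (\<exists>p. P (False # p)) \<or> (\<exists>p. P (True # p))"
  by (metis (full_types) list.exhaust)

lemma ex_node: "(\<exists>q. label_at (Node l x r) q = Some b \<and> P q) \<longleftrightarrow>
  (x = b \<and> P []) \<or> (\<exists>q. label_at l q = Some b \<and> P (False # q)) \<or> (\<exists>q. label_at r q = Some b \<and> P (True # q))"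
  apply (subst ex_addr) by auto

lemma lab_set: "(\<exists>p. label_at T p = Some a) \<longleftrightarrow> a \<in> set_tree T"
proof (induction T)
  case Leaf
  then show ?case by simp
next
  case (Node l x r)
  show ?case
    apply (subst ex_addr)
    using Node by auto
qed

lemma rel_bef:
  "(\<exists>p q. label_at T p = Some a \<and> label_at T q = Some b \<and> RR p q) \<longleftrightarrow> bef (inorder T) a b"
proof (induction T)
  case Leaf
  then show ?case by simp
next
  case (Node l x r)
  have "(\<exists>p q. label_at (Node l x r) p = Some a \<and> label_at (Node l x r) q = Some b \<and> RR p q)
     \<longleftrightarrow> (\<exists>p. label_at (Node l x r) p = Some a \<and> (\<exists>q. label_at (Node l x r) q = Some b \<and> RR p q))"
    by blast
  also have "\<dots> \<longleftrightarrow> (a = x \<and> b \<in> set_tree r) \<or> (a \<in> set_tree l \<and> b = x) \<or>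
      (\<exists>p q. label_at l p = Some a \<and> label_at l q = Some b \<and> RR p q) \<or>
      (a \<in> set_tree l \<and> b \<in> set_tree r) \<or>
      (\<exists>p q. label_at r p = Some a \<and> label_at r q = Some b \<and> RR p q)"
    by (simp add: ex_node RR_simps flip: lab_set) blast
  finally show ?case using Node by (auto simp: bef_append)
qed

lemma tree_inversion_bef: "tree_inversion T a b \<longleftrightarrow> a > b \<and> bef (inorder T) a b"
  unfolding tree_inversion_def using rel_bef[of T a b] unfolding RR_def by blast


lemma psi_decomp:
  assumes "xs \<noteq> []" "i = Min (set xs)"
  shows "xs = takeWhile (\<lambda>y. y \<noteq> i) xs @ i # tl (dropWhile (\<lambda>y. y \<noteq> i) xs)"
proof -
  have "i \<in> set xs" using assms by simp
  then have ne: "dropWhile (\<lambda>y. y \<noteq> i) xs \<noteq> []" by simp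
  have "hd (dropWhile (\<lambda>y. y \<noteq> i) xs) = i"
    using hd_dropWhile[OF ne] by simp
  then have "dropWhile (\<lambda>y. y \<noteq> i) xs = i # tl (dropWhile (\<lambda>y. y \<noteq> i) xs)"
    using ne list.collapse by metis
  then show ?thesis using takeWhile_dropWhile_id[of "\<lambda>y. y \<noteq> i" xs] by simp
qed

lemma psi_Cons: "psi (x # xs) = (let i = Min (set (x # xs)) in Node (psi (takeWhile (\<lambda>y. y \<noteq> i) (x # xs))) i
              (psi (tl (dropWhile (\<lambda>y. y \<noteq> i) (x # xs)))))"
  by (rule psi.simps(2))

declare psi.simps(2)[simp del]

lemma inorder_psi: "inorder (psi xs) = xs"
proof (induction xs rule: psi.induct)
  case 1
  then show ?case by simp
next
  case (2 x xs)
  define i where "i = Min (set (x # xs))"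
  have "psi (x # xs) = Node (psi (takeWhile (\<lambda>y. y \<noteq> i) (x # xs))) i
              (psi (tl (dropWhile (\<lambda>y. y \<noteq> i) (x # xs))))"
    unfolding psi_Cons i_def Let_def ..
  then show ?case using 2 psi_decomp[of "x # xs" i] by (simp add: i_def Let_def)
qed

lemma R_tree_Leaf: "R_tree Leaf = {}"
  unfolding R_tree_def by simp

lemma R_tree_Node: "R_tree (Node l x r) = insert x (R_tree r)"
  unfolding R_tree_def
proof (intro equalityI subsetI)
  fix v assume "v \<in> {v. \<exists>m. label_at \<langle>l, x, r\<rangle> (replicate m True) = Some v}"
  then obtain m where m: "label_at \<langle>l, x, r\<rangle> (replicate m True) = Some v" by blast
  then show "v \<in> insert x {v. \<exists>m. label_at r (replicate m True) = Some v}"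
    by (cases m) auto
next
  fix v assume "v \<in> insert x {v. \<exists>m. label_at r (replicate m True) = Some v}"
  then show "v \<in> {v. \<exists>m. label_at \<langle>l, x, r\<rangle> (replicate m True) = Some v}"
  proof
    assume "v = x" then show ?thesis by (auto intro: exI[of _ 0])
  next
    assume "v \<in> {v. \<exists>m. label_at r (replicate m True) = Some v}"
    then obtain m where "label_at r (replicate m True) = Some v" by blast
    then show ?thesis by (auto intro!: exI[of _ "Suc m"])
  qed
qed

lemma R_tree_sub: "R_tree T \<subseteq> set_tree T"
  unfolding R_tree_def using lab_set[of T] by blast

lemma RLmin_Cons: "RLmin (x # xs) = RLmin xs + (if \<forall>y\<in>set xs. x < y then 1 else 0)"
proof -
  define S where "S = {i. i < length xs \<and> (\<forall>j. i < j \<and> j < length xs \<longrightarrow> xs ! j > xs ! i)}"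
  have eq: "{i. i < length (x # xs) \<and> (\<forall>j. i < j \<and> j < length (x # xs) \<longrightarrow> (x # xs) ! j > (x # xs) ! i)}
     = (if \<forall>y\<in>set xs. x < y then {0} else {}) \<union> Suc ` S"
  proof (intro equalityI subsetI)
    fix i assume i: "i \<in> {i. i < length (x # xs) \<and> (\<forall>j. i < j \<and> j < length (x # xs) \<longrightarrow> (x # xs) ! j > (x # xs) ! i)}"
    show "i \<in> (if \<forall>y\<in>set xs. x < y then {0} else {}) \<union> Suc ` S"
    proof (cases i)
      case 0
      have "\<forall>y\<in>set xs. x < y"
      proof
        fix y assume "y \<in> set xs"
        then obtain k where "k < length xs" "xs ! k = y" by (metis in_set_conv_nth)
        then show "x < y" using i 0 by (auto dest!: spec[of _ "Suc k"])
      qed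
      then show ?thesis using 0 by simp
    next
      case (Suc k)
      have "k \<in> S" unfolding S_def
      proof (intro CollectI conjI allI impI)
        show "k < length xs" using i Suc by simp
        fix j assume "k < j \<and> j < length xs"
        then show "xs ! k < xs ! j" using i Suc by (auto dest!: spec[of _ "Suc j"])
      qed
      then show ?thesis using Suc by blast
    qed
  next
    fix i assume i: "i \<in> (if \<forall>y\<in>set xs. x < y then {0} else {}) \<union> Suc ` S"
    then show "i \<in> {i. i < length (x # xs) \<and> (\<forall>j. i < j \<and> j < length (x # xs) \<longrightarrow> (x # xs) ! j > (x # xs) ! i)}"
    proof
      assume "i \<in> (if \<forall>y\<in>set xs. x < y then {0} else {})"
      then have "i = 0" "\<forall>y\<in>set xs. x < y" by (auto split: if_splits)
      then show ?thesis by (auto simp: nth_Cons split: nat.splits)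
    next
      assume "i \<in> Suc ` S"
      then obtain k where "i = Suc k" "k \<in> S" by blast
      then show ?thesis unfolding S_def
        by (auto simp: nth_Cons split: nat.splits)
    qed
  qed
  have fin: "finite S" unfolding S_def by simp
  have "RLmin (x # xs) = card ((if \<forall>y\<in>set xs. x < y then {0} else {}) \<union> Suc ` S)"
    unfolding RLmin_def eq ..
  also have "\<dots> = (if \<forall>y\<in>set xs. x < y then 1 else 0) + card (Suc ` S)"
    by (subst card_Un_disjoint) (auto simp: fin)
  also have "card (Suc ` S) = card S" by (simp add: card_image)
  finally show ?thesis unfolding RLmin_def S_def by simp
qed

lemma RLmin_append:
  "\<forall>y\<in>set ys. \<exists>z\<in>set zs. z \<le> y \<Longrightarrow> RLmin (ys @ zs) = RLmin zs"
proof (induction ys)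
  case Nil
  then show ?case by simp
next
  case (Cons y ys)
  obtain z where "z \<in> set zs" "z \<le> y" using Cons.prems by auto
  then have "\<not> (\<forall>w\<in>set (ys @ zs). y < w)" using leD by fastforce
  then show ?case using Cons by (simp add: RLmin_Cons)
qed

lemma RLmin_psi: "distinct xs \<Longrightarrow> card (R_tree (psi xs)) = RLmin xs"
proof (induction xs rule: psi.induct)
  case 1
  then show ?case by (simp add: R_tree_Leaf RLmin_def)
next
  case (2 x xs)
  define i where "i = Min (set (x # xs))"
  define A where "A = takeWhile (\<lambda>y. y \<noteq> i) (x # xs)"
  define B where "B = tl (dropWhile (\<lambda>y. y \<noteq> i) (x # xs))"
  have dec: "x # xs = A @ i # B" unfolding A_def B_def using psi_decomp[of "x # xs" i] i_def by simp
  have ps: "psi (x # xs) = Node (psi A) i (psi B)"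
    unfolding psi_Cons i_def A_def B_def Let_def ..
  have dB: "distinct B" and iB: "i \<notin> set B" using 2(3) dec
    by (metis distinct.simps(2) distinct_append)+
  have IH: "card (R_tree (psi B)) = RLmin B"
    using 2(2)[OF refl] dB unfolding B_def i_def by simp
  have fin: "finite (R_tree (psi B))"
    using R_tree_sub[of "psi B"] by (meson finite_set_tree rev_finite_subset)
  have nin: "i \<notin> R_tree (psi B)"
    using R_tree_sub[of "psi B"] iB by (metis inorder_psi set_inorder subsetD)
  have mn: "\<forall>y\<in>set (x # xs). i \<le> y" unfolding i_def by simp
  have "RLmin (x # xs) = RLmin (i # B)"
    unfolding dec by (rule RLmin_append) (use mn dec in auto)
  also have "\<dots> = RLmin B + 1"
  proof -
    have "\<forall>y\<in>set B. i < y" using mn dec iB by (metis Un_iff le_neq_implies_less list.set_intros(2) set_append)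
    then show ?thesis by (simp add: RLmin_Cons)
  qed
  finally show ?case using ps R_tree_Node IH fin nin by simp
qed


lemma inv_part:
  assumes "distinct s"
  shows "perm_inv s = tree_inv (psi s)"
proof -
  define P where "P = {(i, j). i < j \<and> j < length s \<and> s ! i > s ! j}"
  define f where "f = (\<lambda>(i::nat, j::nat). (s ! i, s ! j))"
  have eq: "{(a, b). tree_inversion (psi s) a b} = f ` P"
  proof (intro equalityI subsetI)
    fix ab assume "ab \<in> {(a, b). tree_inversion (psi s) a b}"
    then obtain a b where ab: "ab = (a, b)" "a > b" "bef s a b"
      by (auto simp: tree_inversion_bef inorder_psi)
    then obtain k1 k2 where "k1 < k2 \<and> k2 < length s \<and> s ! k1 = a \<and> s ! k2 = b"
      by (auto simp: bef_nth)
    then show "ab \<in> f ` P" using ab unfolding P_def f_def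
      by (auto intro!: image_eqI[of _ _ "(k1, k2)"])
  next
    fix ab assume "ab \<in> f ` P"
    then obtain k1 k2 where "k1 < k2" "k2 < length s" "s ! k1 > s ! k2" "ab = (s ! k1, s ! k2)"
      unfolding P_def f_def by auto
    then show "ab \<in> {(a, b). tree_inversion (psi s) a b}"
      by (auto simp: tree_inversion_bef inorder_psi bef_nth)
  qed
  have inj: "inj_on f P"
    unfolding inj_on_def P_def f_def using assms by (auto simp: nth_eq_iff_index_eq)
  show ?thesis unfolding perm_inv_def tree_inv_def eq card_image[OF inj] by (simp add: P_def)
qed

theorem proposition4p4:
  fixes n :: nat and \<sigma> :: "nat list"
  assumes "distinct \<sigma>" and "set \<sigma> = {1..n}"
  shows "perm_inv \<sigma> = tree_inv (psi \<sigma>)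
    \<and> RLmin \<sigma> = card (R_tree (psi \<sigma>))
    \<and> IDes_perm \<sigma> = IDes_tree (psi \<sigma>)"
proof (intro conjI)
  show "perm_inv \<sigma> = tree_inv (psi \<sigma>)" using inv_part[OF assms(1)] .
  show "RLmin \<sigma> = card (R_tree (psi \<sigma>))" using RLmin_psi[OF assms(1)] by simp
  have len: "length \<sigma> = n" using distinct_card[OF assms(1)] assms(2) by simp
  show "IDes_perm \<sigma> = IDes_tree (psi \<sigma>)"
  proof (intro equalityI subsetI)
    fix k assume "k \<in> IDes_perm \<sigma>"
    then obtain p q where "1 \<le> k" "p < q" "q < length \<sigma>" "\<sigma> ! p = k + 1" "\<sigma> ! q = k"
      unfolding IDes_perm_def by blast
    then have "tree_inversion (psi \<sigma>) (k + 1) k"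
      by (auto simp: tree_inversion_bef inorder_psi bef_nth)
    then show "k \<in> IDes_tree (psi \<sigma>)" unfolding IDes_tree_def
      by (intro CollectI exI[of _ "k + 1"]) simp
  next
    fix k assume "k \<in> IDes_tree (psi \<sigma>)"
    then obtain i where i: "k = i - 1" "tree_inversion (psi \<sigma>) i (i - 1)"
      unfolding IDes_tree_def by blast
    then have "i > 0" "bef \<sigma> i (i - 1)" by (auto simp: tree_inversion_bef inorder_psi)
    then obtain p q where pq: "p < q" "q < length \<sigma>" "\<sigma> ! p = i" "\<sigma> ! q = i - 1"
      by (auto simp: bef_nth)
    have "i - 1 \<in> set \<sigma>" "i \<in> set \<sigma>" using pq by (metis nth_mem order.strict_trans)+
    then have "1 \<le> i - 1" "i \<le> n" using assms(2) by auto
    then show "k \<in> IDes_perm \<sigma>" unfolding IDes_perm_def using pq i(1) len \<open>i > 0\<close>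
      by (intro CollectI conjI exI[of _ p] exI[of _ q]) auto
  qed
qed

end
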